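(* Let $V$ be a finite set and $\mu\colon\binom V2\to\mathbb{Z}_+$ such that the graph $G(\mu)$ is connected. Let $V'\subseteq V$ be a nonempty subset such that the induced subgraph $G(\mu)|_{V'}$ is connected. Then $n(\mu,V)\geqslant n(\mu,V')$, where $n(\mu,V')$ is computed for the restriction of $\mu$ to $\binom{V'}{2}$.
   Context: $G(\mu)$ is the simple graph on $V$ whose edges are the pairs $e\in\binom V2$ with $\mu(e)>1$. For a finite set $W$ with $|W|=m$ and $\mu\colon\binom W2\to\mathbb{Z}_+$, $n(\mu,W)=\sum_{J\subseteq W,|J|\geqslant2}(-1)^{m-|J|}\prod_{e\in\binom J2}\mu(e)+(-1)^{m-1}(m-1)$ (the number of spheres in a wedge homotopy equivalent to the edge inflation of the simplex on $W$). *)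

theory Defs
  imports Main
begin

definition binom2 :: "'a set \<Rightarrow> 'a set set" where
  "binom2 W = {e. e \<subseteq> W \<and> card e = 2}"

text \<open>Edge relation of the simple graph G(mu) restricted to vertex set W
  (the induced subgraph on W): pairs with mu(e) > 1.\<close>
definition Gedges :: "('a set \<Rightarrow> nat) \<Rightarrow> 'a set \<Rightarrow> ('a \<times> 'a) set" where
  "Gedges \<mu> W = {(x, y). x \<in> W \<and> y \<in> W \<and> x \<noteq> y \<and> \<mu> {x, y} > 1}"

definition G_connected :: "('a set \<Rightarrow> nat) \<Rightarrow> 'a set \<Rightarrow> bool" where
  "G_connected \<mu> W = (\<forall>x\<in>W. \<forall>y\<in>W. (x, y) \<in> (Gedges \<mu> W)\<^sup>*)"

definition n_mu :: "('a set \<Rightarrow> nat) \<Rightarrow> 'a set \<Rightarrow> int" where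
  "n_mu \<mu> W =
     (\<Sum>J\<in>{J. J \<subseteq> W \<and> card J \<ge> 2}.
        (-1) ^ (card W - card J) * (\<Prod>e\<in>binom2 J. int (\<mu> e)))
     + (-1) ^ (card W - 1) * (int (card W) - 1)"

end

theory Submission
  imports Defs
begin

definition nu :: "('a set \<Rightarrow> nat) \<Rightarrow> 'a set \<Rightarrow> int" where
  "nu \<mu> e = int (\<mu> e) - 1"

definition fcov :: "('a set \<Rightarrow> nat) \<Rightarrow> 'a set \<Rightarrow> int" where
  "fcov \<mu> T = (\<Sum>F\<in>{F. F \<subseteq> binom2 T \<and> \<Union>F = T}. \<Prod>e\<in>F. nu \<mu> e)"

lemma finite_binom2: "finite S \<Longrightarrow> finite (binom2 S)"
  unfolding binom2_def by (rule finite_subset[of _ "Pow S"]) auto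

lemma binom2_mono: "T \<subseteq> S \<Longrightarrow> binom2 T \<subseteq> binom2 S"
  unfolding binom2_def by auto

lemma g_eq:
  assumes "finite S"
  shows "(\<Prod>e\<in>binom2 S. int (\<mu> e)) = sum (fcov \<mu>) (Pow S)"
proof -
  have "(\<Prod>e\<in>binom2 S. int (\<mu> e)) = (\<Prod>e\<in>binom2 S. nu \<mu> e + 1)"
    by (simp add: nu_def)
  also have "\<dots> = (\<Sum>F\<in>Pow (binom2 S). (\<Prod>e\<in>F. nu \<mu> e))"
    by (subst prod_add) (simp_all add: finite_binom2 assms)
  also have "\<dots> = (\<Sum>T\<in>Pow S. \<Sum>F\<in>{F. F \<in> Pow (binom2 S) \<and> \<Union>F = T}. (\<Prod>e\<in>F. nu \<mu> e))"
  proof (rule sum.group[symmetric])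
    show "finite (Pow (binom2 S))" using assms finite_binom2 by blast
    show "finite (Pow S)" using assms by blast
    show "Union ` Pow (binom2 S) \<subseteq> Pow S" unfolding binom2_def by blast
  qed
  also have "\<dots> = sum (fcov \<mu>) (Pow S)"
    unfolding fcov_def
  proof (rule sum.cong[OF refl])
    fix T assume "T \<in> Pow S"
    then have "{F. F \<in> Pow (binom2 S) \<and> \<Union>F = T} = {F. F \<subseteq> binom2 T \<and> \<Union>F = T}"
    proof (intro equalityI subsetI)
      fix F assume "F \<in> {F. F \<in> Pow (binom2 S) \<and> \<Union>F = T}"
      then show "F \<in> {F. F \<subseteq> binom2 T \<and> \<Union>F = T}" unfolding binom2_def by blast
    next
      fix F assume "F \<in> {F. F \<subseteq> binom2 T \<and> \<Union>F = T}"
      then show "F \<in> {F. F \<in> Pow (binom2 S) \<and> \<Union>F = T}"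
        using binom2_mono[of T S] \<open>T \<in> Pow S\<close> by blast
    qed
    then show "(\<Sum>F\<in>{F. F \<in> Pow (binom2 S) \<and> \<Union>F = T}. (\<Prod>e\<in>F. nu \<mu> e)) =
      (\<Sum>F\<in>{F. F \<subseteq> binom2 T \<and> \<Union>F = T}. (\<Prod>e\<in>F. nu \<mu> e))" by simp
  qed
  finally show ?thesis .
qed

lemma binom2_small:
  assumes "card T < 2" "finite T" shows "binom2 T = {}"
proof -
  have False if "e \<subseteq> T" "card e = 2" for e
  proof -
    have "card e \<le> card T" using card_mono that \<open>finite T\<close> by blast
    then show False using that \<open>card T < 2\<close> by simp
  qed
  then show ?thesis unfolding binom2_def by blast
qed

lemma n_mu_eq:
  assumes "finite W" "W \<noteq> {}"
  shows "n_mu \<mu> W = fcov \<mu> W"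
proof -
  let ?g = "\<lambda>T. (\<Prod>e\<in>binom2 T. int (\<mu> e))"
  let ?h = "\<lambda>T. (-1::int) ^ (card W - card T) * ?g T"
  have "fcov \<mu> W = (\<Sum>T\<in>Pow W. ?h T)"
    by (rule inclusion_exclusion_mobius[where g = ?g]) (simp_all add: g_eq assms)
  also have "Pow W = {J. J \<subseteq> W \<and> card J \<ge> 2} \<union> insert {} ((\<lambda>x. {x}) ` W)" (is "_ = ?A \<union> ?B")
  proof -
    have "card J < 2 \<Longrightarrow> J \<subseteq> W \<Longrightarrow> J \<in> ?B" for J
    proof -
      assume "card J < 2" "J \<subseteq> W"
      then have "finite J" using assms finite_subset by blast
      then have "card J = 0 \<or> card J = 1" using \<open>card J < 2\<close> by arith
      then show ?thesis
      proof
        assume "card J = 0" then show ?thesis using \<open>finite J\<close> by simp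
      next
        assume "card J = 1" then obtain x where "J = {x}" by (metis One_nat_def card_1_singleton_iff)
        then show ?thesis using \<open>J \<subseteq> W\<close> by auto
      qed
    qed
    note * = this
    show ?thesis
    proof (intro equalityI subsetI)
      fix J assume "J \<in> Pow W" then show "J \<in> ?A \<union> ?B" using * by (cases "card J \<ge> 2") auto
    next
      fix J assume "J \<in> ?A \<union> ?B" then show "J \<in> Pow W" by auto
    qed
  qed
  also have "sum ?h (?A \<union> ?B) = sum ?h ?A + sum ?h ?B"
  proof (rule sum.union_disjoint)
    show "finite ?A" by (rule finite_subset[of _ "Pow W"]) (auto simp: assms)
    show "finite ?B" using assms by simp
    show "?A \<inter> ?B = {}" by auto
  qed
  also have "sum ?h ?B = (-1) ^ card W + (\<Sum>x\<in>W. ?h {x})"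
    by (subst sum.insert) (auto simp: assms sum.reindex binom2_small)
  also have "(\<Sum>x\<in>W. ?h {x}) = int (card W) * (-1) ^ (card W - 1)"
    by (simp add: binom2_small)
  also have "(-1) ^ card W + int (card W) * (-1) ^ (card W - 1) = (-1::int) ^ (card W - 1) * (int (card W) - 1)"
  proof -
    obtain k where k: "card W = Suc k" using assms by (cases "card W") auto
    show ?thesis unfolding k by (simp add: algebra_simps)
  qed
  finally show ?thesis unfolding n_mu_def by (rule sym)
qed

theorem lemma4p14:
  fixes V V' :: "'a set" and \<mu> :: "'a set \<Rightarrow> nat"
  assumes "finite V"
    and "\<forall>e\<in>binom2 V. \<mu> e > 0"
    and "G_connected \<mu> V"
    and "V' \<subseteq> V" and "V' \<noteq> {}"
    and "G_connected \<mu> V'"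
  shows "n_mu \<mu> V \<ge> n_mu \<mu> V'"
proof -
  have fV': "finite V'" using assms finite_subset by blast
  have eqs: "n_mu \<mu> V = fcov \<mu> V" "n_mu \<mu> V' = fcov \<mu> V'"
    using n_mu_eq assms fV' by auto
  obtain x0 where x0: "x0 \<in> V'" using assms by auto
  have "\<exists>w. (v, w) \<in> Gedges \<mu> V" if "v \<in> V - V'" for v
  proof -
    have "(v, x0) \<in> (Gedges \<mu> V)\<^sup>*" "v \<noteq> x0"
      using assms(3,4) x0 that unfolding G_connected_def by auto
    then show ?thesis by (cases rule: converse_rtranclE) auto
  qed
  then obtain w where w: "\<And>v. v \<in> V - V' \<Longrightarrow> (v, w v) \<in> Gedges \<mu> V" by metis
  define T where "T = (\<lambda>v. {v, w v}) ` (V - V')"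
  have Tsub: "T \<subseteq> binom2 V"
    using w unfolding T_def binom2_def Gedges_def by auto
  have Tdis: "T \<inter> binom2 V' = {}"
    unfolding T_def binom2_def by auto
  have Tfin: "finite T" unfolding T_def using assms by simp
  have Tun: "\<Union>T \<union> V' = V"
    using w assms(4) unfolding T_def Gedges_def by auto
  have Tge: "1 \<le> (\<Prod>e\<in>T. nu \<mu> e)"
    by (rule prod_ge_1) (use w in \<open>auto simp: T_def Gedges_def nu_def\<close>)
  have nunn: "0 \<le> nu \<mu> e" if "e \<in> binom2 V" for e
    using assms(2) that by (auto simp: nu_def)
  let ?C = "\<lambda>W. {F. F \<subseteq> binom2 W \<and> \<Union>F = W}"
  have finC: "finite (?C V)"
    by (rule finite_subset[of _ "Pow (binom2 V)"]) (auto simp: finite_binom2 assms)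
  have finC': "finite (?C V')"
    by (rule finite_subset[of _ "Pow (binom2 V')"]) (auto simp: finite_binom2 fV')
  have img: "(\<lambda>F. F \<union> T) ` ?C V' \<subseteq> ?C V"
    using Tsub Tun binom2_mono[OF assms(4)] by auto
  have inj: "inj_on (\<lambda>F. F \<union> T) (?C V')"
    using Tdis by (auto simp: inj_on_def)
  have "fcov \<mu> V' = (\<Sum>F\<in>?C V'. \<Prod>e\<in>F. nu \<mu> e)" by (simp add: fcov_def)
  also have "\<dots> \<le> (\<Sum>F\<in>?C V'. \<Prod>e\<in>F \<union> T. nu \<mu> e)"
  proof (rule sum_mono)
    fix F assume F: "F \<in> ?C V'"
    have fF: "finite F" using F finite_subset finite_binom2 fV' by blast
    have dis: "F \<inter> T = {}" using F Tdis by auto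
    have "(\<Prod>e\<in>F \<union> T. nu \<mu> e) = (\<Prod>e\<in>F. nu \<mu> e) * (\<Prod>e\<in>T. nu \<mu> e)"
      by (rule prod.union_disjoint) (use fF Tfin dis in auto)
    moreover have "0 \<le> (\<Prod>e\<in>F. nu \<mu> e)"
      by (rule prod_nonneg) (use F binom2_mono[OF assms(4)] nunn in blast)
    ultimately show "(\<Prod>e\<in>F. nu \<mu> e) \<le> (\<Prod>e\<in>F \<union> T. nu \<mu> e)"
      using Tge by (simp add: mult_le_cancel_left1)
  qed
  also have "\<dots> = (\<Sum>F\<in>(\<lambda>F. F \<union> T) ` ?C V'. \<Prod>e\<in>F. nu \<mu> e)"
    by (simp add: sum.reindex[OF inj])
  also have "\<dots> \<le> (\<Sum>F\<in>?C V. \<Prod>e\<in>F. nu \<mu> e)"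
    by (rule sum_mono2[OF finC img]) (use nunn in \<open>auto intro!: prod_nonneg\<close>)
  also have "\<dots> = fcov \<mu> V" by (simp add: fcov_def)
  finally show ?thesis using eqs by simp
qed

end
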